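(* Let $X$ and $Y$ be sets of points in a tree with $|X|=|Y|$, and let $r\in X$. Then there exists a minimum cost perfect matching of $X$ to $Y$ (cost = sum of tree distances of matched pairs) that is $r$-local, i.e., in which $r$ is matched to a point $y\in Y$ such that the path $\mathcal{P}(r,y)$ contains no point of $Y$ other than $y$.
   Context: The tree carries its path metric $d$; $\mathcal{P}(v,w)$ denotes the unique path between points $v$ and $w$. *)

theory Defs
  imports Complex_Main
begin

definition is_path :: "('a \<times> 'a) set \<Rightarrow> 'a \<Rightarrow> 'a \<Rightarrow> 'a list \<Rightarrow> bool" where
  "is_path E u v p \<longleftrightarrow> p \<noteq> [] \<and> hd p = u \<and> last p = v \<and> distinct p \<and>
     (\<forall>i < length p - 1. (p ! i, p ! Suc i) \<in> E)"

definition weighted_tree :: "'a set \<Rightarrow> ('a \<times> 'a) set \<Rightarrow> ('a \<Rightarrow> 'a \<Rightarrow> real) \<Rightarrow> bool" where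
  "weighted_tree V E w \<longleftrightarrow> finite V \<and> V \<noteq> {} \<and> E \<subseteq> V \<times> V \<and> sym E \<and>
     (\<forall>a. (a, a) \<notin> E) \<and>
     (\<forall>u\<in>V. \<forall>v\<in>V. \<exists>!p. is_path E u v p) \<and>
     (\<forall>(a, b)\<in>E. w a b > 0 \<and> w a b = w b a)"

definition tree_path :: "('a \<times> 'a) set \<Rightarrow> 'a \<Rightarrow> 'a \<Rightarrow> 'a list" where
  "tree_path E u v = (THE p. is_path E u v p)"

definition tree_dist :: "('a \<times> 'a) set \<Rightarrow> ('a \<Rightarrow> 'a \<Rightarrow> real) \<Rightarrow> 'a \<Rightarrow> 'a \<Rightarrow> real" where
  "tree_dist E w u v = (let p = tree_path E u v in
     (\<Sum>i < length p - 1. w (p ! i) (p ! Suc i)))"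

definition matching_cost :: "('a \<times> 'a) set \<Rightarrow> ('a \<Rightarrow> 'a \<Rightarrow> real) \<Rightarrow> 'a set \<Rightarrow> ('a \<Rightarrow> 'a) \<Rightarrow> real" where
  "matching_cost E w X f = (\<Sum>x\<in>X. tree_dist E w x (f x))"

definition min_cost_matching ::
  "('a \<times> 'a) set \<Rightarrow> ('a \<Rightarrow> 'a \<Rightarrow> real) \<Rightarrow> 'a set \<Rightarrow> 'a set \<Rightarrow> ('a \<Rightarrow> 'a) \<Rightarrow> bool" where
  "min_cost_matching E w X Y f \<longleftrightarrow> bij_betw f X Y \<and>
     (\<forall>g. bij_betw g X Y \<longrightarrow> matching_cost E w X f \<le> matching_cost E w X g)"

definition r_local :: "('a \<times> 'a) set \<Rightarrow> 'a set \<Rightarrow> 'a \<Rightarrow> ('a \<Rightarrow> 'a) \<Rightarrow> bool" where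
  "r_local E Y r f \<longleftrightarrow> (\<forall>y\<in>Y. y \<in> set (tree_path E r (f r)) \<longrightarrow> y = f r)"

end

theory Submission imports Defs "HOL-Library.FuncSet" "HOL-Combinatorics.Transposition"
begin

fun walk :: "('a \<times> 'a) set \<Rightarrow> 'a list \<Rightarrow> bool" where
  "walk E [] = True" | "walk E [a] = True" | "walk E (a # b # xs) = ((a,b) \<in> E \<and> walk E (b # xs))"

fun wt :: "('a \<Rightarrow> 'a \<Rightarrow> real) \<Rightarrow> 'a list \<Rightarrow> real" where
  "wt w [] = 0" | "wt w [a] = 0" | "wt w (a # b # xs) = w a b + wt w (b # xs)"

lemma sum_eq_wt: "(\<Sum>i < length p - 1. w (p ! i) (p ! Suc i)) = wt w p"
proof (induction p)
  case (Cons a p)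
  show ?case
  proof (cases p)
    case (Cons b xs)
    have "(\<Sum>i < length (a#b#xs) - 1. w ((a#b#xs) ! i) ((a#b#xs) ! Suc i))
        = (\<Sum>i < Suc (length (b#xs) - 1). w ((a#b#xs) ! i) ((a#b#xs) ! Suc i))" by simp
    also have "\<dots> = w a b + (\<Sum>i < length (b#xs) - 1. w ((b#xs) ! i) ((b#xs) ! Suc i))"
      by (subst sum.lessThan_Suc_shift) simp
    finally show ?thesis using Cons.IH Cons by simp
  qed simp
qed simp

lemma walk_iff: "walk E p \<longleftrightarrow> (\<forall>i < length p - 1. (p ! i, p ! Suc i) \<in> E)"
proof (induction p rule: walk.induct)
  case (3 E a b xs)
  show ?case
  proof
    assume "walk E (a#b#xs)" then show "\<forall>i < length (a#b#xs) - 1. ((a#b#xs) ! i, (a#b#xs) ! Suc i) \<in> E"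
      using 3 by (auto simp: less_Suc_eq_0_disj)
  next
    assume h: "\<forall>i < length (a#b#xs) - 1. ((a#b#xs) ! i, (a#b#xs) ! Suc i) \<in> E"
    have "(a,b) \<in> E" using h[rule_format, of 0] by simp
    moreover have "\<forall>i < length (b#xs) - 1. ((b#xs) ! i, (b#xs) ! Suc i) \<in> E"
    proof (intro allI impI)
      fix i assume "i < length (b#xs) - 1"
      then show "((b#xs) ! i, (b#xs) ! Suc i) \<in> E" using h[rule_format, of "Suc i"] by simp
    qed
    ultimately show "walk E (a#b#xs)" using 3 by simp
  qed
qed auto

lemma is_path_iff: "is_path E u v p \<longleftrightarrow> p \<noteq> [] \<and> hd p = u \<and> last p = v \<and> distinct p \<and> walk E p"
  unfolding is_path_def walk_iff by auto

lemma walk_append: "walk E (xs @ y # ys) \<longleftrightarrow> walk E (xs @ [y]) \<and> walk E (y # ys)"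
proof (induction xs)
  case (Cons a xs) then show ?case by (cases xs) auto
qed simp

lemma wt_append: "wt w (xs @ y # ys) = wt w (xs @ [y]) + wt w (y # ys)"
proof (induction xs)
  case (Cons a xs) then show ?case by (cases xs) auto
qed simp

lemma wt_nonneg:
  assumes "weighted_tree V E w" "walk E p" shows "wt w p \<ge> 0"
  using assms(2)
proof (induction p)
  case (Cons a p)
  show ?case
  proof (cases p)
    case (Cons b xs)
    then have "w a b > 0" using assms(1) Cons.prems unfolding weighted_tree_def by auto
    with Cons Cons.IH Cons.prems show ?thesis by simp
  qed simp
qed simp

lemma wt_pos:
  assumes "weighted_tree V E w" "walk E (a # b # xs)" shows "wt w (a # b # xs) > 0"
proof -
  have "w a b > 0" using assms unfolding weighted_tree_def by auto
  moreover have "wt w (b # xs) \<ge> 0" using wt_nonneg[OF assms(1)] assms(2) by simp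
  ultimately show ?thesis by simp
qed

lemma shorten:
  assumes wtr: "weighted_tree V E w"
  shows "walk E p \<Longrightarrow> p \<noteq> [] \<Longrightarrow> \<exists>q. is_path E (hd p) (last p) q \<and> wt w q \<le> wt w p"
proof (induction "length p" arbitrary: p rule: less_induct)
  case less
  show ?case
  proof (cases "distinct p")
    case True then show ?thesis using less.prems by (intro exI[of _ p]) (simp add: is_path_iff)
  next
    case False
    then obtain xs ys zs y where p: "p = xs@[y]@ys@[y]@zs" using not_distinct_decomp by blast
    define p' where "p' = xs @ y # zs"
    have w1: "walk E (xs @ [y])" "walk E (y # ys @ y # zs)"
      using less.prems(1) walk_append[of E xs y "ys @ y # zs"] p by auto
    have w2: "walk E (y # ys @ [y])" "walk E (y # zs)"
      using w1(2) walk_append[of E "y # ys" y zs] by auto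
    have wp': "walk E p'" unfolding p'_def using w1(1) w2(2) walk_append[of E xs y zs] by simp
    have "wt w p = wt w (xs @ [y]) + wt w (y # ys @ [y]) + wt w (y # zs)"
      using p wt_append[of w xs y "ys @ y # zs"] wt_append[of w "y # ys" y zs] by simp
    moreover have "wt w p' = wt w (xs @ [y]) + wt w (y # zs)"
      unfolding p'_def by (rule wt_append)
    moreover have "wt w (y # ys @ [y]) \<ge> 0" using wt_nonneg[OF wtr w2(1)] .
    ultimately have le: "wt w p' \<le> wt w p" by simp
    have "length p' < length p" unfolding p'_def p by simp
    moreover have "p' \<noteq> []" unfolding p'_def by simp
    ultimately obtain q where q: "is_path E (hd p') (last p') q" "wt w q \<le> wt w p'"
      using less.hyps wp' by blast
    have h1: "hd p' = hd p" unfolding p'_def p by (cases xs) simp_all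
    have h2: "last p' = last p" unfolding p'_def p by (cases zs) simp_all
    show ?thesis using q le h1 h2 by (intro exI[of _ q]) simp
  qed
qed

lemma tp:
  assumes wtr: "weighted_tree V E w" and "u \<in> V" "v \<in> V"
  shows "is_path E u v (tree_path E u v)"
    and "is_path E u v p \<Longrightarrow> p = tree_path E u v"
proof -
  have ex: "\<exists>!p. is_path E u v p" using assms unfolding weighted_tree_def by blast
  then show "is_path E u v (tree_path E u v)" unfolding tree_path_def by (rule theI')
  show "is_path E u v p \<Longrightarrow> p = tree_path E u v"
    using ex \<open>is_path E u v (tree_path E u v)\<close> by blast
qed

lemma td: "tree_dist E w u v = wt w (tree_path E u v)"
  unfolding tree_dist_def Let_def sum_eq_wt ..

lemma triangle:
  assumes wtr: "weighted_tree V E w" and V: "a \<in> V" "b \<in> V" "c \<in> V"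
  shows "tree_dist E w a c \<le> tree_dist E w a b + tree_dist E w b c"
proof -
  define p1 where "p1 = tree_path E a b"
  define p2 where "p2 = tree_path E b c"
  have P1: "is_path E a b p1" "is_path E b c p2" unfolding p1_def p2_def
    using tp(1)[OF wtr V(1) V(2)] tp(1)[OF wtr V(2) V(3)] by auto
  obtain B where B: "p2 = b # B" using P1(2) unfolding is_path_iff by (cases p2) auto
  obtain A where A: "p1 = A @ [b]" using P1(1) unfolding is_path_iff
    by (metis append_butlast_last_id)
  define p where "p = A @ b # B"
  have "walk E p1" "walk E p2" using P1 unfolding is_path_iff by blast+
  then have "walk E p" unfolding p_def using A B walk_append[of E A b B] by simp
  moreover have "p \<noteq> []" unfolding p_def by simp
  ultimately obtain q where q: "is_path E (hd p) (last p) q" "wt w q \<le> wt w p"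
    using shorten[OF wtr] by blast
  have "hd p = a" using P1(1) A unfolding p_def is_path_iff by (cases A) auto
  moreover have "last p = c" using P1(2) B unfolding p_def is_path_iff by (cases B) auto
  ultimately have "q = tree_path E a c" using q tp[OF wtr V(1) V(3)] by auto
  moreover have "wt w p = wt w p1 + wt w p2" unfolding p_def using A B wt_append by simp
  ultimately show ?thesis using q unfolding td p1_def p2_def by simp
qed

lemma split_dist:
  assumes wtr: "weighted_tree V E w" and V: "r \<in> V" "y \<in> V"
    and yin: "y' \<in> set (tree_path E r y)" and ne: "y' \<noteq> y"
  shows "tree_dist E w r y' < tree_dist E w r y" and "y' \<in> V"
    and "tree_dist E w r y = tree_dist E w r y' + tree_dist E w y' y"
proof -
  define p where "p = tree_path E r y"
  have P: "is_path E r y p" unfolding p_def using tp(1)[OF wtr V] .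
  obtain A B where AB: "p = A @ y' # B" using yin split_list unfolding p_def by metis
  have "walk E p" using P unfolding is_path_iff by blast
  then have wA: "walk E (A @ [y'])" and wB: "walk E (y' # B)" using AB walk_append[of E A y' B] by simp_all
  have "B \<noteq> []" using P AB ne unfolding is_path_iff by auto
  then obtain b B' where B: "B = b # B'" by (cases B) auto
  have "(y', b) \<in> E" using wB B by simp
  then show y'V: "y' \<in> V" using wtr unfolding weighted_tree_def by auto
  have "is_path E r y' (A @ [y'])" using P AB wA unfolding is_path_iff by (cases A) auto
  then have e1: "A @ [y'] = tree_path E r y'" using tp(2)[OF wtr V(1) y'V] by blast
  have "wt w p = wt w (A @ [y']) + wt w (y' # B)" using AB wt_append by simp
  moreover have "wt w (y' # B) > 0" using wt_pos[OF wtr] wB B by simp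
  ultimately show "tree_dist E w r y' < tree_dist E w r y" unfolding td p_def e1 by simp
  have "is_path E y' y (y' # B)" using P AB wB unfolding is_path_iff by auto
  then have e2: "y' # B = tree_path E y' y" using tp(2)[OF wtr y'V V(2)] by blast
  show "tree_dist E w r y = tree_dist E w r y' + tree_dist E w y' y"
    unfolding td p_def[symmetric] e1[symmetric] e2[symmetric] using AB wt_append by simp
qed

lemma ex_min_on:
  fixes h :: "'b \<Rightarrow> real"
  assumes "finite S" "S \<noteq> {}" shows "\<exists>x\<in>S. \<forall>y\<in>S. h x \<le> h y"
proof -
  have "Min (h ` S) \<in> h ` S" using assms by simp
  then obtain x where x: "x \<in> S" "h x = Min (h ` S)" by auto
  show ?thesis
  proof (intro bexI[of _ x] ballI)
    fix y assume "y \<in> S"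
    then show "h x \<le> h y" using x(2) assms(1) by simp
  qed (rule x(1))
qed

lemma cost_restrict: "matching_cost E w X (restrict g X) = matching_cost E w X g"
  unfolding matching_cost_def by (rule sum.cong) auto

lemma cost_split:
  assumes "finite X" "a \<in> X" "b \<in> X" "a \<noteq> b"
  shows "matching_cost E w X h = tree_dist E w a (h a) + tree_dist E w b (h b)
           + (\<Sum>x\<in>X - {a, b}. tree_dist E w x (h x))"
proof -
  have "matching_cost E w X h = tree_dist E w a (h a) + (\<Sum>x\<in>X - {a}. tree_dist E w x (h x))"
    unfolding matching_cost_def using assms by (simp add: sum.remove)
  also have "(\<Sum>x\<in>X - {a}. tree_dist E w x (h x)) = tree_dist E w b (h b) + (\<Sum>x\<in>X - {a} - {b}. tree_dist E w x (h x))"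
    using assms by (subst sum.remove[of _ b]) auto
  also have "X - {a} - {b} = X - {a, b}" by auto
  finally show ?thesis by simp
qed

theorem lemma3:
  fixes V :: "'a set" and E :: "('a \<times> 'a) set" and w :: "'a \<Rightarrow> 'a \<Rightarrow> real"
    and X Y :: "'a set" and r :: 'a
  assumes "weighted_tree V E w"
    and "X \<subseteq> V" and "Y \<subseteq> V" and "card X = card Y"
    and "r \<in> X"
  shows "\<exists>f. min_cost_matching E w X Y f \<and> r_local E Y r f"
proof -
  note wtr = assms(1)
  have fV: "finite V" using wtr unfolding weighted_tree_def by blast
  have fX: "finite X" and fY: "finite Y" using fV assms(2,3) finite_subset by blast+
  define M where "M = {f \<in> X \<rightarrow>\<^sub>E Y. bij_betw f X Y}"
  have fM: "finite M" unfolding M_def using finite_PiE[OF fX, of "\<lambda>_. Y"] fY by simp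
  obtain h where h: "bij_betw h X Y" using finite_same_card_bij[OF fX fY assms(4)] by blast
  have rM: "bij_betw g X Y \<Longrightarrow> restrict g X \<in> M" for g
    unfolding M_def using bij_betw_imp_funcset[of "restrict g X" X Y]
    by (auto simp: bij_betw_cong[of X "restrict g X" g] dest: bij_betwE)
  have "M \<noteq> {}" using rM[OF h] by blast
  define cost where "cost g = matching_cost E w X g" for g
  obtain f0 where f0: "f0 \<in> M" "\<forall>g\<in>M. cost f0 \<le> cost g" using ex_min_on[OF fM \<open>M \<noteq> {}\<close>] by blast
  define C where "C = {f \<in> M. cost f = cost f0}"
  have fC: "finite C" "C \<noteq> {}" unfolding C_def using fM f0 by auto
  obtain f where f: "f \<in> C" "\<forall>g\<in>C. tree_dist E w r (f r) \<le> tree_dist E w r (g r)"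
    using ex_min_on[OF fC, of "\<lambda>g. tree_dist E w r (g r)"] by blast
  have fM': "f \<in> M" and fcost: "cost f = cost f0" using f(1) unfolding C_def by auto
  have fbij: "bij_betw f X Y" using fM' unfolding M_def by blast
  have mc: "min_cost_matching E w X Y f"
    unfolding min_cost_matching_def
  proof (intro conjI allI impI fbij)
    fix g assume "bij_betw g X Y"
    then have "cost f0 \<le> cost (restrict g X)" using f0 rM by blast
    then show "matching_cost E w X f \<le> matching_cost E w X g"
      using fcost cost_restrict unfolding cost_def by metis
  qed
  have rl: "r_local E Y r f"
    unfolding r_local_def
  proof (intro ballI impI, rule ccontr)
    fix y assume yY: "y \<in> Y" and yin: "y \<in> set (tree_path E r (f r))" and ne: "y \<noteq> f r"
    define y0 where "y0 = f r"
    have y0Y: "y0 \<in> Y" unfolding y0_def using fbij assms(5) bij_betwE by blast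
    have rV: "r \<in> V" using assms by blast
    have y0V: "y0 \<in> V" "y \<in> V" using y0Y yY assms(3) by blast+
    have sd: "tree_dist E w r y < tree_dist E w r y0"
      "tree_dist E w r y0 = tree_dist E w r y + tree_dist E w y y0"
      using split_dist[OF wtr rV y0V(1), of y] yin ne unfolding y0_def by auto
    define x' where "x' = inv_into X f y"
    have x'X: "x' \<in> X" and fx': "f x' = y" unfolding x'_def
      using fbij yY by (auto simp: bij_betw_def inv_into_into f_inv_into_f)
    have x'r: "x' \<noteq> r" using fx' ne by auto
    have x'V: "x' \<in> V" using x'X assms(2) by blast
    define g where "g = restrict (f \<circ> transpose r x') X"
    have "bij_betw (f \<circ> transpose r x') X Y"
      by (rule bij_betw_trans[OF _ fbij]) (simp add: assms(5) x'X)
    then have gM: "g \<in> M" unfolding g_def using rM by blast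
    have gr: "g r = y" and gx': "g x' = y0"
      unfolding g_def y0_def using assms(5) x'X fx' by auto
    have gsum: "(\<Sum>x\<in>X - {r, x'}. tree_dist E w x (g x)) = (\<Sum>x\<in>X - {r, x'}. tree_dist E w x (f x))"
      by (rule sum.cong) (auto simp: g_def transpose_def)
    have tri: "tree_dist E w x' y0 \<le> tree_dist E w x' y + tree_dist E w y y0"
      using triangle[OF wtr x'V y0V(2) y0V(1)] .
    have "cost g = tree_dist E w r y + tree_dist E w x' y0 + (\<Sum>x\<in>X - {r, x'}. tree_dist E w x (f x))"
      unfolding cost_def using cost_split[OF fX assms(5) x'X x'r[symmetric], of E w g] gr gx' gsum by simp
    moreover have "cost f = tree_dist E w r y0 + tree_dist E w x' y + (\<Sum>x\<in>X - {r, x'}. tree_dist E w x (f x))"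
      unfolding cost_def using cost_split[OF fX assms(5) x'X x'r[symmetric], of E w f] fx' y0_def by simp
    ultimately have "cost g \<le> cost f" using sd(2) tri by linarith
    then have "cost g = cost f0" using f0 gM fcost by force
    then have "g \<in> C" unfolding C_def using gM by blast
    then have "tree_dist E w r (f r) \<le> tree_dist E w r y" using f(2) gr by force
    then show False using sd(1) unfolding y0_def by linarith
  qed
  show ?thesis using mc rl by blast
qed



end
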